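(* Let $\mathcal{C}$ be a CD-category equipped with a normalisation structure $\mathrm{nrm}$ and with cancellative comparators $\nabla$. (i) If $\omega\colon I\to X$ is a state with full support, then $\mathrm{nrm}\big(\nabla_X\circ(\omega\otimes \mathrm{id}_X)\big)=\mathrm{id}_X$ as maps $X\to X$. (ii) More generally, if $c\colon X\to Y$ is a channel with full support, then $\mathrm{nrm}\big(\nabla_Y\circ(c\otimes \mathrm{id}_Y)\big)=\,!_X\otimes \mathrm{id}_Y$ as maps $X\otimes Y\to Y$.
   Context: A CD-category is a symmetric monoidal category (unit $I$) in which every object $X$ carries a copy map $\Delta_X\colon X\to X\otimes X$ and a discard map $!_X\colon X\to I$ forming a commutative comonoid, compatibly with $\otimes$. A map $f$ is a channel if $!\circ f=\,!$; a state is a map $I\to X$. The domain of $f\colon X\to Y$ is $\mathrm{dom}(f)=\,!_Y\circ f$; $g\colon X\to Y$ is a normalisation of $f$ if $f=(\mathrm{dom}(f)\otimes g)\circ\Delta_X$; $f$ is normalised if it is a normalisation of itself. A normalisation structure assigns to every $f\colon X\to Y$ a normalised map $\mathrm{nrm}(f)\colon X\to Y$ that is a normalisation of $f$, such that: $\mathrm{nrm}(f\otimes g)=\mathrm{nrm}(f)\otimes\mathrm{nrm}(g)$; $\mathrm{nrm}(h\circ f)=h\circ\mathrm{nrm}(f)$ for every channel $h$; discarders and copiers on inputs can be pulled out, i.e. $\mathrm{nrm}(f\circ(\mathrm{id}\otimes !))=\mathrm{nrm}(f)\circ(\mathrm{id}\otimes !)$ and $\mathrm{nrm}(f\circ\Delta)=\mathrm{nrm}(f)\circ\Delta$;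 and $\mathrm{nrm}(f)=f$ whenever $f$ is normalised. A comparator structure assigns to each $X$ a map $\nabla_X\colon X\otimes X\to X$ that is commutative, associative, compatible with $\otimes$, and satisfies the Frobenius/spider equations $\nabla\circ\Delta=\mathrm{id}$ and $(\nabla\otimes\mathrm{id})\circ(\mathrm{id}\otimes\Delta)=\Delta\circ\nabla=(\mathrm{id}\otimes\nabla)\circ(\Delta\otimes\mathrm{id})$. The cap is $\cap_X=\,!_X\circ\nabla_X\colon X\otimes X\to I$. Comparators are cancellative if for $f,g\colon A\to Y\otimes Z$, $(\cap_Y\otimes\mathrm{id}_Z)\circ(\mathrm{id}_Y\otimes f)=(\cap_Y\otimes\mathrm{id}_Z)\circ(\mathrm{id}_Y\otimes g)$ implies $f=g$. A map $f\colon X\to Y$ has full support if $\mathrm{nrm}\big(\cap_Y\circ(f\otimes\mathrm{id}_Y)\big)=\,!_{X\otimes Y}$ (a state is the case $X=I$). In the Kleisli category of the finite subdistribution monad (maps $X\to\mathcal{D}_{\le1}(Y)$, $\mathrm{nrm}$ = pointwise rescaling to total mass $1$, with the zero subdistribution sent to itself, $\nabla(x,x')=1|x\rangle$ if $x=x'$ and $0$ otherwise), full support of $f$ means $f(x)(y)>0$ for all $x,y$. *)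

theory Defs
  imports Main
begin

record ('o, 'm) cdcat =
  cArr   :: "'m \<Rightarrow> bool"
  cDom   :: "'m \<Rightarrow> 'o"
  cCod   :: "'m \<Rightarrow> 'o"
  cComp  :: "'m \<Rightarrow> 'm \<Rightarrow> 'm"          (* cComp g f = g \<circ> f *)
  cId    :: "'o \<Rightarrow> 'm"
  cTo    :: "'o \<Rightarrow> 'o \<Rightarrow> 'o"
  cTa    :: "'m \<Rightarrow> 'm \<Rightarrow> 'm"
  cUnit  :: "'o"
  cAssoc :: "'o \<Rightarrow> 'o \<Rightarrow> 'o \<Rightarrow> 'm"
  cLU    :: "'o \<Rightarrow> 'm"
  cRU    :: "'o \<Rightarrow> 'm"
  cSym   :: "'o \<Rightarrow> 'o \<Rightarrow> 'm"
  cCopy  :: "'o \<Rightarrow> 'm"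
  cDisc  :: "'o \<Rightarrow> 'm"

definition hom :: "('o, 'm, 'z) cdcat_scheme \<Rightarrow> 'o \<Rightarrow> 'o \<Rightarrow> 'm set" where
  "hom C X Y = {f. cArr C f \<and> cDom C f = X \<and> cCod C f = Y}"

definition is_iso :: "('o, 'm, 'z) cdcat_scheme \<Rightarrow> 'm \<Rightarrow> bool" where
  "is_iso C f \<longleftrightarrow> cArr C f \<and> (\<exists>g. g \<in> hom C (cCod C f) (cDom C f) \<and>
      cComp C g f = cId C (cDom C f) \<and> cComp C f g = cId C (cCod C f))"

definition inv_arr :: "('o, 'm, 'z) cdcat_scheme \<Rightarrow> 'm \<Rightarrow> 'm" where
  "inv_arr C f = (SOME g. g \<in> hom C (cCod C f) (cDom C f) \<and>
      cComp C g f = cId C (cDom C f) \<and> cComp C f g = cId C (cCod C f))"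

definition ainv :: "('o, 'm, 'z) cdcat_scheme \<Rightarrow> 'o \<Rightarrow> 'o \<Rightarrow> 'o \<Rightarrow> 'm" where
  "ainv C X Y Z = inv_arr C (cAssoc C X Y Z)"

text \<open>The middle-four interchange (X\<otimes>Y)\<otimes>(Z\<otimes>W) \<rightarrow> (X\<otimes>Z)\<otimes>(Y\<otimes>W).\<close>
definition shuffle :: "('o, 'm, 'z) cdcat_scheme \<Rightarrow> 'o \<Rightarrow> 'o \<Rightarrow> 'o \<Rightarrow> 'o \<Rightarrow> 'm" where
  "shuffle C X Y Z W =
     cComp C (ainv C X Z (cTo C Y W))
      (cComp C (cTa C (cId C X)
                  (cComp C (cAssoc C Z Y W)
                     (cComp C (cTa C (cSym C Y Z) (cId C W)) (ainv C Y Z W))))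
         (cAssoc C X Y (cTo C Z W)))"

locale cd_category =
  fixes C :: "('o, 'm, 'z) cdcat_scheme"
  assumes id_hom: "cId C X \<in> hom C X X"
    and comp_hom: "\<lbrakk>f \<in> hom C X Y; g \<in> hom C Y Z\<rbrakk> \<Longrightarrow> cComp C g f \<in> hom C X Z"
    and comp_idl: "f \<in> hom C X Y \<Longrightarrow> cComp C (cId C Y) f = f"
    and comp_idr: "f \<in> hom C X Y \<Longrightarrow> cComp C f (cId C X) = f"
    and comp_assoc: "\<lbrakk>f \<in> hom C X Y; g \<in> hom C Y Z; h \<in> hom C Z W\<rbrakk> \<Longrightarrow>
          cComp C h (cComp C g f) = cComp C (cComp C h g) f"
    and tensor_hom: "\<lbrakk>f \<in> hom C X Y; g \<in> hom C X' Y'\<rbrakk> \<Longrightarrow>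
          cTa C f g \<in> hom C (cTo C X X') (cTo C Y Y')"
    and tensor_id: "cTa C (cId C X) (cId C Y) = cId C (cTo C X Y)"
    and interchange: "\<lbrakk>f \<in> hom C X Y; g \<in> hom C Y Z; f' \<in> hom C X' Y'; g' \<in> hom C Y' Z'\<rbrakk> \<Longrightarrow>
          cTa C (cComp C g f) (cComp C g' f') = cComp C (cTa C g g') (cTa C f f')"
    and assoc_hom: "cAssoc C X Y Z \<in> hom C (cTo C (cTo C X Y) Z) (cTo C X (cTo C Y Z))"
    and lu_hom: "cLU C X \<in> hom C (cTo C (cUnit C) X) X"
    and ru_hom: "cRU C X \<in> hom C (cTo C X (cUnit C)) X"
    and sym_hom: "cSym C X Y \<in> hom C (cTo C X Y) (cTo C Y X)"
    and assoc_iso: "is_iso C (cAssoc C X Y Z)"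
    and lu_iso: "is_iso C (cLU C X)"
    and ru_iso: "is_iso C (cRU C X)"
    and assoc_nat: "\<lbrakk>f \<in> hom C X X'; g \<in> hom C Y Y'; h \<in> hom C Z Z'\<rbrakk> \<Longrightarrow>
          cComp C (cAssoc C X' Y' Z') (cTa C (cTa C f g) h)
          = cComp C (cTa C f (cTa C g h)) (cAssoc C X Y Z)"
    and lu_nat: "f \<in> hom C X Y \<Longrightarrow>
          cComp C (cLU C Y) (cTa C (cId C (cUnit C)) f) = cComp C f (cLU C X)"
    and ru_nat: "f \<in> hom C X Y \<Longrightarrow>
          cComp C (cRU C Y) (cTa C f (cId C (cUnit C))) = cComp C f (cRU C X)"
    and sym_nat: "\<lbrakk>f \<in> hom C X X'; g \<in> hom C Y Y'\<rbrakk> \<Longrightarrow>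
          cComp C (cSym C X' Y') (cTa C f g) = cComp C (cTa C g f) (cSym C X Y)"
    and pentagon: "cComp C (cAssoc C W X (cTo C Y Z)) (cAssoc C (cTo C W X) Y Z)
          = cComp C (cTa C (cId C W) (cAssoc C X Y Z))
              (cComp C (cAssoc C W (cTo C X Y) Z) (cTa C (cAssoc C W X Y) (cId C Z)))"
    and triangle: "cComp C (cTa C (cId C X) (cLU C Y)) (cAssoc C X (cUnit C) Y)
          = cTa C (cRU C X) (cId C Y)"
    and sym_inv: "cComp C (cSym C Y X) (cSym C X Y) = cId C (cTo C X Y)"
    and hexagon: "cComp C (cAssoc C Y Z X) (cComp C (cSym C X (cTo C Y Z)) (cAssoc C X Y Z))
          = cComp C (cTa C (cId C Y) (cSym C X Z))
              (cComp C (cAssoc C Y X Z) (cTa C (cSym C X Y) (cId C Z)))"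
    and copy_hom: "cCopy C X \<in> hom C X (cTo C X X)"
    and disc_hom: "cDisc C X \<in> hom C X (cUnit C)"
    and counit: "cComp C (cLU C X) (cComp C (cTa C (cDisc C X) (cId C X)) (cCopy C X)) = cId C X"
    and coassoc: "cComp C (cAssoc C X X X) (cComp C (cTa C (cCopy C X) (cId C X)) (cCopy C X))
          = cComp C (cTa C (cId C X) (cCopy C X)) (cCopy C X)"
    and cocomm: "cComp C (cSym C X X) (cCopy C X) = cCopy C X"
    and copy_tensor: "cCopy C (cTo C X Y) = cComp C (shuffle C X X Y Y) (cTa C (cCopy C X) (cCopy C Y))"
    and disc_tensor: "cDisc C (cTo C X Y) = cComp C (cLU C (cUnit C)) (cTa C (cDisc C X) (cDisc C Y))"
    and copy_unit: "cCopy C (cUnit C) = inv_arr C (cLU C (cUnit C))"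
    and disc_unit: "cDisc C (cUnit C) = cId C (cUnit C)"

definition channel :: "('o, 'm, 'z) cdcat_scheme \<Rightarrow> 'm \<Rightarrow> bool" where
  "channel C f \<longleftrightarrow> cArr C f \<and> cComp C (cDisc C (cCod C f)) f = cDisc C (cDom C f)"

definition dmn :: "('o, 'm, 'z) cdcat_scheme \<Rightarrow> 'm \<Rightarrow> 'm" where
  "dmn C f = cComp C (cDisc C (cCod C f)) f"

definition is_normalisation :: "('o, 'm, 'z) cdcat_scheme \<Rightarrow> 'm \<Rightarrow> 'm \<Rightarrow> bool" where
  "is_normalisation C f g \<longleftrightarrow> cArr C f \<and> g \<in> hom C (cDom C f) (cCod C f) \<and>
     f = cComp C (cLU C (cCod C f)) (cComp C (cTa C (dmn C f) g) (cCopy C (cDom C f)))"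

definition normalised :: "('o, 'm, 'z) cdcat_scheme \<Rightarrow> 'm \<Rightarrow> bool" where
  "normalised C f \<longleftrightarrow> is_normalisation C f f"

definition normalisation_structure ::
  "('o, 'm, 'z) cdcat_scheme \<Rightarrow> ('m \<Rightarrow> 'm) \<Rightarrow> bool" where
  "normalisation_structure C nrm \<longleftrightarrow>
     (\<forall>f. cArr C f \<longrightarrow> normalised C (nrm f) \<and> is_normalisation C f (nrm f)) \<and>
     (\<forall>f g. cArr C f \<and> cArr C g \<longrightarrow> nrm (cTa C f g) = cTa C (nrm f) (nrm g)) \<and>
     (\<forall>f h X Y Z. f \<in> hom C X Y \<and> h \<in> hom C Y Z \<and> channel C h \<longrightarrow>
        nrm (cComp C h f) = cComp C h (nrm f)) \<and>
     (\<forall>f X Y Z. f \<in> hom C X Y \<longrightarrow>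
        nrm (cComp C f (cComp C (cRU C X) (cTa C (cId C X) (cDisc C Z))))
        = cComp C (nrm f) (cComp C (cRU C X) (cTa C (cId C X) (cDisc C Z)))) \<and>
     (\<forall>f X Y. f \<in> hom C (cTo C X X) Y \<longrightarrow>
        nrm (cComp C f (cCopy C X)) = cComp C (nrm f) (cCopy C X)) \<and>
     (\<forall>f. cArr C f \<and> normalised C f \<longrightarrow> nrm f = f)"

definition comparator_structure ::
  "('o, 'm, 'z) cdcat_scheme \<Rightarrow> ('o \<Rightarrow> 'm) \<Rightarrow> bool" where
  "comparator_structure C cmp \<longleftrightarrow>
     (\<forall>X. cmp X \<in> hom C (cTo C X X) X) \<and>
     (\<forall>X. cComp C (cmp X) (cSym C X X) = cmp X) \<and>
     (\<forall>X. cComp C (cmp X) (cTa C (cmp X) (cId C X))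
          = cComp C (cmp X) (cComp C (cTa C (cId C X) (cmp X)) (cAssoc C X X X))) \<and>
     (\<forall>X Y. cmp (cTo C X Y) = cComp C (cTa C (cmp X) (cmp Y)) (shuffle C X Y X Y)) \<and>
     cmp (cUnit C) = cLU C (cUnit C) \<and>
     (\<forall>X. cComp C (cmp X) (cCopy C X) = cId C X) \<and>
     (\<forall>X. cComp C (cTa C (cmp X) (cId C X)) (cComp C (ainv C X X X) (cTa C (cId C X) (cCopy C X)))
          = cComp C (cCopy C X) (cmp X)) \<and>
     (\<forall>X. cComp C (cCopy C X) (cmp X)
          = cComp C (cTa C (cId C X) (cmp X)) (cComp C (cAssoc C X X X) (cTa C (cCopy C X) (cId C X))))"

definition cap :: "('o, 'm, 'z) cdcat_scheme \<Rightarrow> ('o \<Rightarrow> 'm) \<Rightarrow> 'o \<Rightarrow> 'm" where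
  "cap C cmp X = cComp C (cDisc C X) (cmp X)"

definition cap_apply :: "('o, 'm, 'z) cdcat_scheme \<Rightarrow> ('o \<Rightarrow> 'm) \<Rightarrow> 'o \<Rightarrow> 'o \<Rightarrow> 'm \<Rightarrow> 'm" where
  "cap_apply C cmp Y Z f = cComp C (cLU C Z) (cComp C (cTa C (cap C cmp Y) (cId C Z))
       (cComp C (ainv C Y Y Z) (cTa C (cId C Y) f)))"

definition cancellative :: "('o, 'm, 'z) cdcat_scheme \<Rightarrow> ('o \<Rightarrow> 'm) \<Rightarrow> bool" where
  "cancellative C cmp \<longleftrightarrow>
     (\<forall>A Y Z f g. f \<in> hom C A (cTo C Y Z) \<and> g \<in> hom C A (cTo C Y Z) \<and>
        cap_apply C cmp Y Z f = cap_apply C cmp Y Z g \<longrightarrow> f = g)"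

definition full_support ::
  "('o, 'm, 'z) cdcat_scheme \<Rightarrow> ('m \<Rightarrow> 'm) \<Rightarrow> ('o \<Rightarrow> 'm) \<Rightarrow> 'm \<Rightarrow> bool" where
  "full_support C nrm cmp f \<longleftrightarrow>
     nrm (cComp C (cap C cmp (cCod C f)) (cTa C f (cId C (cCod C f))))
     = cDisc C (cTo C (cDom C f) (cCod C f))"

end

theory Submission
  imports Defs
begin

context cd_category begin

abbreviation cp (infixr "\<cdot>" 55) where "g \<cdot> f \<equiv> cComp C g f"
abbreviation tn (infixr "\<otimes>" 60) where "f \<otimes> g \<equiv> cTa C f g"
abbreviation ar where "ar \<equiv> cArr C"
abbreviation dm where "dm \<equiv> cDom C"
abbreviation cd where "cd \<equiv> cCod C"
abbreviation oT where "oT \<equiv> cTo C"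
abbreviation U where "U \<equiv> cUnit C"
abbreviation ii where "ii \<equiv> cId C"
abbreviation al where "al \<equiv> cAssoc C"
abbreviation ai where "ai \<equiv> ainv C"
abbreviation lu where "lu \<equiv> cLU C"
abbreviation ru where "ru \<equiv> cRU C"
abbreviation sy where "sy \<equiv> cSym C"
abbreviation cpy where "cpy \<equiv> cCopy C"
abbreviation ds where "ds \<equiv> cDisc C"
abbreviation li where "li X \<equiv> inv_arr C (cLU C X)"
abbreviation ri where "ri X \<equiv> inv_arr C (cRU C X)"

lemma homI: "ar f \<Longrightarrow> f \<in> hom C (dm f) (cd f)" by (simp add: hom_def)
lemma homE: "f \<in> hom C X Y \<Longrightarrow> ar f \<and> dm f = X \<and> cd f = Y" by (simp add: hom_def)

lemma inv_props: assumes "is_iso C f"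
  shows "ar (inv_arr C f) \<and> dm (inv_arr C f) = cd f \<and> cd (inv_arr C f) = dm f \<and>
   inv_arr C f \<cdot> f = ii (dm f) \<and> f \<cdot> inv_arr C f = ii (cd f)"
proof -
  have "\<exists>g. g \<in> hom C (cCod C f) (cDom C f) \<and>
      cComp C g f = cId C (cDom C f) \<and> cComp C f g = cId C (cCod C f)"
    using assms by (simp add: is_iso_def)
  from someI_ex[OF this] show ?thesis unfolding inv_arr_def hom_def by blast
qed

lemma id_ar[simp]: "ar (ii X)" "dm (ii X) = X" "cd (ii X) = X"
  using id_hom[of X] by (auto simp: hom_def)
lemma al_ar[simp]: "ar (al X Y Z)" "dm (al X Y Z) = oT (oT X Y) Z" "cd (al X Y Z) = oT X (oT Y Z)"
  using assoc_hom[of X Y Z] by (auto simp: hom_def)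
lemma lu_ar[simp]: "ar (lu X)" "dm (lu X) = oT U X" "cd (lu X) = X"
  using lu_hom[of X] by (auto simp: hom_def)
lemma ru_ar[simp]: "ar (ru X)" "dm (ru X) = oT X U" "cd (ru X) = X"
  using ru_hom[of X] by (auto simp: hom_def)
lemma sy_ar[simp]: "ar (sy X Y)" "dm (sy X Y) = oT X Y" "cd (sy X Y) = oT Y X"
  using sym_hom[of X Y] by (auto simp: hom_def)
lemma cpy_ar[simp]: "ar (cpy X)" "dm (cpy X) = X" "cd (cpy X) = oT X X"
  using copy_hom[of X] by (auto simp: hom_def)
lemma ds_ar[simp]: "ar (ds X)" "dm (ds X) = X" "cd (ds X) = U"
  using disc_hom[of X] by (auto simp: hom_def)
lemma ai_ar[simp]: "ar (ai X Y Z)" "dm (ai X Y Z) = oT X (oT Y Z)" "cd (ai X Y Z) = oT (oT X Y) Z"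
  and ai_l: "ai X Y Z \<cdot> al X Y Z = ii (oT (oT X Y) Z)" and ai_r: "al X Y Z \<cdot> ai X Y Z = ii (oT X (oT Y Z))"
  using inv_props[OF assoc_iso[of X Y Z]] by (auto simp: ainv_def)
lemma li_ar[simp]: "ar (li X)" "dm (li X) = X" "cd (li X) = oT U X"
  and li_l: "li X \<cdot> lu X = ii (oT U X)" and li_r: "lu X \<cdot> li X = ii X"
  using inv_props[OF lu_iso[of X]] by auto
lemma ri_ar[simp]: "ar (ri X)" "dm (ri X) = X" "cd (ri X) = oT X U"
  and ri_l: "ri X \<cdot> ru X = ii (oT X U)" and ri_r: "ru X \<cdot> ri X = ii X"
  using inv_props[OF ru_iso[of X]] by auto

lemma comp_ar[simp]:
  assumes "ar f" "ar g" "dm g = cd f"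
  shows "ar (g \<cdot> f)" "dm (g \<cdot> f) = dm f" "cd (g \<cdot> f) = cd g"
  using comp_hom[OF homI[OF assms(1)], of g "cd g"] homI[OF assms(2)] assms(3)
  by (auto simp: hom_def)

lemma tn_ar[simp]:
  assumes "ar f" "ar g"
  shows "ar (f \<otimes> g)" "dm (f \<otimes> g) = oT (dm f) (dm g)" "cd (f \<otimes> g) = oT (cd f) (cd g)"
  using tensor_hom[OF homI[OF assms(1)] homI[OF assms(2)]] by (auto simp: hom_def)

lemma assoc[simp]: "ar f \<Longrightarrow> ar g \<Longrightarrow> ar h \<Longrightarrow> dm g = cd f \<Longrightarrow> dm h = cd g \<Longrightarrow>
   (h \<cdot> g) \<cdot> f = h \<cdot> g \<cdot> f"
  using comp_assoc[of f "dm f" "cd f" g "cd g" h "cd h"] by (simp add: hom_def)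

lemma idl[simp]: "ar f \<Longrightarrow> cd f = X \<Longrightarrow> ii X \<cdot> f = f"
  using comp_idl[OF homI, of f] by simp
lemma idr[simp]: "ar f \<Longrightarrow> dm f = X \<Longrightarrow> f \<cdot> ii X = f"
  using comp_idr[OF homI, of f] by simp
lemma tid[simp]: "ii X \<otimes> ii Y = ii (oT X Y)" by (rule tensor_id)

lemma ichg: "ar f \<Longrightarrow> ar g \<Longrightarrow> ar f' \<Longrightarrow> ar g' \<Longrightarrow> dm g = cd f \<Longrightarrow> dm g' = cd f' \<Longrightarrow>
   (g \<cdot> f) \<otimes> (g' \<cdot> f') = (g \<otimes> g') \<cdot> (f \<otimes> f')"
  using interchange[of f "dm f" "cd f" g "cd g" f' "dm f'" "cd f'" g' "cd g'"] by (simp add: hom_def)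

lemma reassoc: "a \<cdot> b = c \<Longrightarrow> ar a \<Longrightarrow> ar b \<Longrightarrow> ar k \<Longrightarrow> dm a = cd b \<Longrightarrow> dm b = cd k \<Longrightarrow>
   a \<cdot> b \<cdot> k = c \<cdot> k"
  by (metis assoc)


lemma lu_n: "ar f \<Longrightarrow> lu (cd f) \<cdot> (ii U \<otimes> f) = f \<cdot> lu (dm f)"
  using lu_nat[OF homI] by simp
lemma ru_n: "ar f \<Longrightarrow> ru (cd f) \<cdot> (f \<otimes> ii U) = f \<cdot> ru (dm f)"
  using ru_nat[OF homI] by simp
lemma sy_n: "ar f \<Longrightarrow> ar g \<Longrightarrow> sy (cd f) (cd g) \<cdot> (f \<otimes> g) = (g \<otimes> f) \<cdot> sy (dm f) (dm g)"
  using sym_nat[OF homI homI] by simp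
lemma al_n: "ar f \<Longrightarrow> ar g \<Longrightarrow> ar h \<Longrightarrow>
   al (cd f) (cd g) (cd h) \<cdot> ((f \<otimes> g) \<otimes> h) = (f \<otimes> (g \<otimes> h)) \<cdot> al (dm f) (dm g) (dm h)"
  using assoc_nat[OF homI homI homI] by simp

lemma ai_n: assumes "ar f" "ar g" "ar h"
  shows "ai (cd f) (cd g) (cd h) \<cdot> (f \<otimes> (g \<otimes> h)) = ((f \<otimes> g) \<otimes> h) \<cdot> ai (dm f) (dm g) (dm h)"
proof -
  have "ai (cd f) (cd g) (cd h) \<cdot> (f \<otimes> (g \<otimes> h)) =
     ai (cd f) (cd g) (cd h) \<cdot> (f \<otimes> (g \<otimes> h)) \<cdot> al (dm f) (dm g) (dm h) \<cdot> ai (dm f) (dm g) (dm h)"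
    using assms by (simp add: ai_r)
  also have "\<dots> = ai (cd f) (cd g) (cd h) \<cdot> al (cd f) (cd g) (cd h) \<cdot> ((f \<otimes> g) \<otimes> h) \<cdot> ai (dm f) (dm g) (dm h)"
    using assms by (simp add: reassoc[OF al_n[symmetric]])
  also have "\<dots> = ((f \<otimes> g) \<otimes> h) \<cdot> ai (dm f) (dm g) (dm h)"
    using assms by (simp add: reassoc[OF ai_l])
  finally show ?thesis .
qed

lemma cancel_lU: assumes "ar a" "ar b" "dm a = dm b" "cd a = cd b" "ii U \<otimes> a = ii U \<otimes> b"
  shows "a = b"
proof -
  have "a = a \<cdot> lu (dm a) \<cdot> li (dm a)" using assms by (simp add: li_r)
  also have "\<dots> = lu (cd a) \<cdot> (ii U \<otimes> a) \<cdot> li (dm a)" using assms(1) by (simp add: reassoc[OF lu_n[symmetric]])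
  also have "\<dots> = lu (cd b) \<cdot> (ii U \<otimes> b) \<cdot> li (dm b)" using assms by simp
  also have "\<dots> = b \<cdot> lu (dm b) \<cdot> li (dm b)" using assms by (simp add: reassoc[OF lu_n])
  also have "\<dots> = b" using assms by (simp add: li_r)
  finally show ?thesis .
qed

lemma cancel_rU: assumes "ar a" "ar b" "dm a = dm b" "cd a = cd b" "a \<otimes> ii U = b \<otimes> ii U"
  shows "a = b"
proof -
  have "a = a \<cdot> ru (dm a) \<cdot> ri (dm a)" using assms by (simp add: ri_r)
  also have "\<dots> = ru (cd a) \<cdot> (a \<otimes> ii U) \<cdot> ri (dm a)" using assms(1) by (simp add: reassoc[OF ru_n[symmetric]])
  also have "\<dots> = ru (cd b) \<cdot> (b \<otimes> ii U) \<cdot> ri (dm b)" using assms by simp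
  also have "\<dots> = b \<cdot> ru (dm b) \<cdot> ri (dm b)" using assms by (simp add: reassoc[OF ru_n])
  also have "\<dots> = b" using assms by (simp add: ri_r)
  finally show ?thesis .
qed

lemma tl_dist: "ar f \<Longrightarrow> ar g \<Longrightarrow> dm g = cd f \<Longrightarrow> ii X \<otimes> (g \<cdot> f) = (ii X \<otimes> g) \<cdot> (ii X \<otimes> f)"
  using ichg[of "ii X" "ii X" f g] by simp
lemma tr_dist: "ar f \<Longrightarrow> ar g \<Longrightarrow> dm g = cd f \<Longrightarrow> (g \<cdot> f) \<otimes> ii X = (g \<otimes> ii X) \<cdot> (f \<otimes> ii X)"
  using ichg[of f g "ii X" "ii X"] by simp



lemma al_ai_k: "ar k \<Longrightarrow> cd k = oT X (oT Y Z) \<Longrightarrow> al X Y Z \<cdot> ai X Y Z \<cdot> k = k"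
  by (simp add: reassoc[OF ai_r])
lemma ai_al_k: "ar k \<Longrightarrow> cd k = oT (oT X Y) Z \<Longrightarrow> ai X Y Z \<cdot> al X Y Z \<cdot> k = k"
  by (simp add: reassoc[OF ai_l])
lemma al_ai_t_k: "ar k \<Longrightarrow> cd k = oT (oT X (oT Y Z)) W \<Longrightarrow> (al X Y Z \<otimes> ii W) \<cdot> (ai X Y Z \<otimes> ii W) \<cdot> k = k"
proof -
  assume a: "ar k" "cd k = oT (oT X (oT Y Z)) W"
  have "(al X Y Z \<otimes> ii W) \<cdot> (ai X Y Z \<otimes> ii W) = ii (oT (oT X (oT Y Z)) W)"
    using ichg[of "ai X Y Z" "al X Y Z" "ii W" "ii W"] by (simp add: ai_r)
  from reassoc[OF this] a show ?thesis by simp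
qed
lemma tri: "(ii X \<otimes> lu Y) \<cdot> al X U Y = ru X \<otimes> ii Y" by (rule triangle)

lemma kelly: "lu (oT Y Z) \<cdot> al U Y Z = lu Y \<otimes> ii Z"
proof -
  have "(ii U \<otimes> (lu (oT Y Z) \<cdot> al U Y Z)) \<cdot> al U (oT U Y) Z \<cdot> (al U U Y \<otimes> ii Z)
     = (ii U \<otimes> lu (oT Y Z)) \<cdot> (ii U \<otimes> al U Y Z) \<cdot> al U (oT U Y) Z \<cdot> (al U U Y \<otimes> ii Z)"
    by (simp add: tl_dist)
  also have "\<dots> = (ii U \<otimes> lu (oT Y Z)) \<cdot> al U U (oT Y Z) \<cdot> al (oT U U) Y Z"
    using pentagon[of U U Y Z] by simp
  also have "\<dots> = (ru U \<otimes> ii (oT Y Z)) \<cdot> al (oT U U) Y Z"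
    by (simp add: reassoc[OF tri])
  also have "\<dots> = al U Y Z \<cdot> ((ru U \<otimes> ii Y) \<otimes> ii Z)"
    using al_n[of "ru U" "ii Y" "ii Z"] by simp
  also have "\<dots> = al U Y Z \<cdot> (((ii U \<otimes> lu Y) \<cdot> al U U Y) \<otimes> ii Z)"
    by (simp add: tri)
  also have "\<dots> = al U Y Z \<cdot> ((ii U \<otimes> lu Y) \<otimes> ii Z) \<cdot> (al U U Y \<otimes> ii Z)"
    by (simp add: tr_dist)
  also have "\<dots> = (ii U \<otimes> (lu Y \<otimes> ii Z)) \<cdot> al U (oT U Y) Z \<cdot> (al U U Y \<otimes> ii Z)"
    using reassoc[OF al_n[of "ii U" "lu Y" "ii Z"], of "al U U Y \<otimes> ii Z"] by simp
  finally have e: "(ii U \<otimes> (lu (oT Y Z) \<cdot> al U Y Z)) \<cdot> al U (oT U Y) Z \<cdot> (al U U Y \<otimes> ii Z) =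
     (ii U \<otimes> (lu Y \<otimes> ii Z)) \<cdot> al U (oT U Y) Z \<cdot> (al U U Y \<otimes> ii Z)" .
  have "ii U \<otimes> (lu (oT Y Z) \<cdot> al U Y Z) = 
     (ii U \<otimes> (lu (oT Y Z) \<cdot> al U Y Z)) \<cdot> al U (oT U Y) Z \<cdot> (al U U Y \<otimes> ii Z) \<cdot> (ai U U Y \<otimes> ii Z) \<cdot> ai U (oT U Y) Z"
    by (simp add: al_ai_t_k ai_r)
  also have "\<dots> = (ii U \<otimes> (lu Y \<otimes> ii Z)) \<cdot> al U (oT U Y) Z \<cdot> (al U U Y \<otimes> ii Z) \<cdot> (ai U U Y \<otimes> ii Z) \<cdot> ai U (oT U Y) Z"
    using reassoc[OF e, of "(ai U U Y \<otimes> ii Z) \<cdot> ai U (oT U Y) Z"] by simp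
  also have "\<dots> = ii U \<otimes> (lu Y \<otimes> ii Z)"
    by (simp add: al_ai_t_k ai_r)
  finally have "ii U \<otimes> (lu (oT Y Z) \<cdot> al U Y Z) = ii U \<otimes> (lu Y \<otimes> ii Z)" .
  then show ?thesis by (rule cancel_lU[rotated 4]) simp_all
qed


lemma sy_sy_k: "ar k \<Longrightarrow> cd k = oT X Y \<Longrightarrow> sy Y X \<cdot> sy X Y \<cdot> k = k"
  by (simp add: reassoc[OF sym_inv])

lemma ru_lu_sy: "ru A = lu A \<cdot> sy A U"
proof -
  let ?B = U
  have h: "al U ?B A \<cdot> sy A (oT U ?B) \<cdot> al A U ?B = (ii U \<otimes> sy A ?B) \<cdot> al U A ?B \<cdot> (sy A U \<otimes> ii ?B)"
    using hexagon[of U ?B A] by simp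
  have "sy A ?B \<cdot> (ru A \<otimes> ii ?B) = sy A ?B \<cdot> (ii A \<otimes> lu ?B) \<cdot> al A U ?B"
    by (simp add: tri)
  also have "\<dots> = (lu ?B \<otimes> ii A) \<cdot> sy A (oT U ?B) \<cdot> al A U ?B"
    using reassoc[OF sy_n[of "ii A" "lu ?B"], of "al A U ?B"] by simp
  also have "\<dots> = lu (oT ?B A) \<cdot> al U ?B A \<cdot> sy A (oT U ?B) \<cdot> al A U ?B"
    by (simp add: reassoc[OF kelly])
  also have "\<dots> = lu (oT ?B A) \<cdot> (ii U \<otimes> sy A ?B) \<cdot> al U A ?B \<cdot> (sy A U \<otimes> ii ?B)"
    using h by simp
  also have "\<dots> = sy A ?B \<cdot> lu (oT A ?B) \<cdot> al U A ?B \<cdot> (sy A U \<otimes> ii ?B)"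
    using reassoc[OF lu_n[of "sy A ?B"], of "al U A ?B \<cdot> (sy A U \<otimes> ii ?B)"] by simp
  also have "\<dots> = sy A ?B \<cdot> (lu A \<otimes> ii ?B) \<cdot> (sy A U \<otimes> ii ?B)"
    by (simp add: reassoc[OF kelly])
  also have "\<dots> = sy A ?B \<cdot> ((lu A \<cdot> sy A U) \<otimes> ii ?B)"
    by (simp add: tr_dist)
  finally have e: "sy A ?B \<cdot> (ru A \<otimes> ii ?B) = sy A ?B \<cdot> ((lu A \<cdot> sy A U) \<otimes> ii ?B)" .
  have "ru A \<otimes> ii ?B = sy ?B A \<cdot> sy A ?B \<cdot> (ru A \<otimes> ii ?B)" by (simp add: sy_sy_k)
  also have "\<dots> = sy ?B A \<cdot> sy A ?B \<cdot> ((lu A \<cdot> sy A U) \<otimes> ii ?B)" using e by simp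
  also have "\<dots> = (lu A \<cdot> sy A U) \<otimes> ii ?B" by (simp add: sy_sy_k)
  finally have "ru A \<otimes> ii U = (lu A \<cdot> sy A U) \<otimes> ii U" .
  then show ?thesis by (rule cancel_rU[rotated 4]) simp_all
qed

lemma ru_sy: "ru Y \<cdot> sy U Y = lu Y"
  by (simp add: ru_lu_sy sym_inv)

lemma counit_r: "ru X \<cdot> (ii X \<otimes> ds X) \<cdot> cpy X = ii X"
proof -
  have "ru X \<cdot> (ii X \<otimes> ds X) \<cdot> cpy X = ru X \<cdot> (ii X \<otimes> ds X) \<cdot> sy X X \<cdot> cpy X"
    using cocomm[of X] by simp
  also have "\<dots> = ru X \<cdot> sy U X \<cdot> (ds X \<otimes> ii X) \<cdot> cpy X"
    using reassoc[OF sy_n[of "ds X" "ii X"], of "cpy X"] by simp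
  also have "\<dots> = lu X \<cdot> (ds X \<otimes> ii X) \<cdot> cpy X"
    by (simp add: reassoc[OF ru_sy])
  also have "\<dots> = ii X" using counit[of X] by simp
  finally show ?thesis .
qed
lemma L1: "(ii Y \<otimes> (lu Y \<cdot> (ds X \<otimes> ii Y))) \<cdot> al Y X Y \<cdot> (sy X Y \<otimes> ii Y) = (lu Y \<cdot> (ds X \<otimes> ii Y)) \<otimes> ii Y"
proof -
  have "(ii Y \<otimes> (lu Y \<cdot> (ds X \<otimes> ii Y))) \<cdot> al Y X Y \<cdot> (sy X Y \<otimes> ii Y)
     = (ii Y \<otimes> lu Y) \<cdot> (ii Y \<otimes> (ds X \<otimes> ii Y)) \<cdot> al Y X Y \<cdot> (sy X Y \<otimes> ii Y)"
    by (simp add: tl_dist)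
  also have "\<dots> = (ii Y \<otimes> lu Y) \<cdot> al Y U Y \<cdot> ((ii Y \<otimes> ds X) \<otimes> ii Y) \<cdot> (sy X Y \<otimes> ii Y)"
    using reassoc[OF al_n[of "ii Y" "ds X" "ii Y", symmetric], of "sy X Y \<otimes> ii Y"] by simp
  also have "\<dots> = (ru Y \<otimes> ii Y) \<cdot> ((ii Y \<otimes> ds X) \<otimes> ii Y) \<cdot> (sy X Y \<otimes> ii Y)"
    by (simp add: reassoc[OF tri])
  also have "\<dots> = (ru Y \<cdot> (ii Y \<otimes> ds X) \<cdot> sy X Y) \<otimes> ii Y"
    by (simp add: tr_dist)
  also have "\<dots> = (ru Y \<cdot> sy U Y \<cdot> (ds X \<otimes> ii Y)) \<otimes> ii Y"
    using sy_n[of "ds X" "ii Y"] by simp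
  also have "\<dots> = (lu Y \<cdot> (ds X \<otimes> ii Y)) \<otimes> ii Y"
    by (simp add: reassoc[OF ru_sy])
  finally show ?thesis .
qed

lemma L2: "((lu Y \<cdot> (ds X \<otimes> ii Y)) \<otimes> ii Y) \<cdot> ai X Y Y = lu (oT Y Y) \<cdot> (ds X \<otimes> ii (oT Y Y))"
proof -
  have k: "(lu Y \<otimes> ii Y) \<cdot> ai U Y Y = lu (oT Y Y)"
    using kelly[of Y Y] by (metis ai_r idr lu_ar(1) lu_ar(2) al_ai_k assoc ai_ar al_ar reassoc)
  have "((lu Y \<cdot> (ds X \<otimes> ii Y)) \<otimes> ii Y) \<cdot> ai X Y Y = (lu Y \<otimes> ii Y) \<cdot> ((ds X \<otimes> ii Y) \<otimes> ii Y) \<cdot> ai X Y Y"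
    by (simp add: tr_dist)
  also have "\<dots> = (lu Y \<otimes> ii Y) \<cdot> ai U Y Y \<cdot> (ds X \<otimes> ii (oT Y Y))"
    using ai_n[of "ds X" "ii Y" "ii Y"] by simp
  also have "\<dots> = lu (oT Y Y) \<cdot> (ds X \<otimes> ii (oT Y Y))"
    by (simp add: reassoc[OF k])
  finally show ?thesis .
qed

lemma L3: "(ii X \<otimes> (lu W \<cdot> (ds X \<otimes> ii W))) \<cdot> al X X W = (ru X \<cdot> (ii X \<otimes> ds X)) \<otimes> ii W"
proof -
  have "(ii X \<otimes> (lu W \<cdot> (ds X \<otimes> ii W))) \<cdot> al X X W = (ii X \<otimes> lu W) \<cdot> (ii X \<otimes> (ds X \<otimes> ii W)) \<cdot> al X X W"
    by (simp add: tl_dist)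
  also have "\<dots> = (ii X \<otimes> lu W) \<cdot> al X U W \<cdot> ((ii X \<otimes> ds X) \<otimes> ii W)"
    using al_n[of "ii X" "ds X" "ii W"] by simp
  also have "\<dots> = (ru X \<otimes> ii W) \<cdot> ((ii X \<otimes> ds X) \<otimes> ii W)"
    by (simp add: reassoc[OF tri])
  also have "\<dots> = (ru X \<cdot> (ii X \<otimes> ds X)) \<otimes> ii W"
    by (simp add: tr_dist)
  finally show ?thesis .
qed

lemma E: "(ii (oT X Y) \<otimes> (lu Y \<cdot> (ds X \<otimes> ii Y))) \<cdot> cpy (oT X Y) = ai X Y Y \<cdot> (ii X \<otimes> cpy Y)"
proof -
  let ?p = "lu Y \<cdot> (ds X \<otimes> ii Y)"
  let ?T = "al Y X Y \<cdot> (sy X Y \<otimes> ii Y) \<cdot> ai X Y Y"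
  have T: "(ii Y \<otimes> ?p) \<cdot> ?T = lu (oT Y Y) \<cdot> (ds X \<otimes> ii (oT Y Y))"
    using reassoc[OF L1[of Y X], of "ai X Y Y"] L2[of Y X] by simp
  have "(ii (oT X Y) \<otimes> ?p) \<cdot> cpy (oT X Y) =
     (ii (oT X Y) \<otimes> ?p) \<cdot> ai X Y (oT X Y) \<cdot> (ii X \<otimes> ?T) \<cdot> al X X (oT Y Y) \<cdot> (cpy X \<otimes> cpy Y)"
    by (simp add: copy_tensor shuffle_def)
  also have "\<dots> = ai X Y Y \<cdot> (ii X \<otimes> (ii Y \<otimes> ?p)) \<cdot> (ii X \<otimes> ?T) \<cdot> al X X (oT Y Y) \<cdot> (cpy X \<otimes> cpy Y)"
    using reassoc[OF ai_n[of "ii X" "ii Y" ?p, symmetric], of "(ii X \<otimes> ?T) \<cdot> al X X (oT Y Y) \<cdot> (cpy X \<otimes> cpy Y)"]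
    by simp
  also have "\<dots> = ai X Y Y \<cdot> (ii X \<otimes> ((ii Y \<otimes> ?p) \<cdot> ?T)) \<cdot> al X X (oT Y Y) \<cdot> (cpy X \<otimes> cpy Y)"
    using reassoc[OF tl_dist[of ?T "ii Y \<otimes> ?p" X, symmetric], of "al X X (oT Y Y) \<cdot> (cpy X \<otimes> cpy Y)"]
    by simp
  also have "\<dots> = ai X Y Y \<cdot> (ii X \<otimes> (lu (oT Y Y) \<cdot> (ds X \<otimes> ii (oT Y Y)))) \<cdot> al X X (oT Y Y) \<cdot> (cpy X \<otimes> cpy Y)"
    by (simp only: T)
  also have "\<dots> = ai X Y Y \<cdot> ((ru X \<cdot> (ii X \<otimes> ds X)) \<otimes> ii (oT Y Y)) \<cdot> (cpy X \<otimes> cpy Y)"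
    using reassoc[OF L3[of X "oT Y Y"], of "cpy X \<otimes> cpy Y"] by simp
  also have "\<dots> = ai X Y Y \<cdot> ((ru X \<cdot> (ii X \<otimes> ds X) \<cdot> cpy X) \<otimes> (ii (oT Y Y) \<cdot> cpy Y))"
    using ichg[of "cpy X" "ru X \<cdot> (ii X \<otimes> ds X)" "cpy Y" "ii (oT Y Y)"] by simp
  also have "\<dots> = ai X Y Y \<cdot> (ii X \<otimes> cpy Y)"
    by (simp add: counit_r)
  finally show ?thesis .
qed
lemma step1:
  assumes K: "comparator_structure C cmp" and f: "ar f" "dm f = X" "cd f = Y"
  shows "cpy Y \<cdot> cmp Y \<cdot> (f \<otimes> ii Y) = ((cmp Y \<cdot> (f \<otimes> ii Y)) \<otimes> ii Y) \<cdot> ai X Y Y \<cdot> (ii X \<otimes> cpy Y)"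
proof -
  have c: "ar (cmp Y)" "dm (cmp Y) = oT Y Y" "cd (cmp Y) = Y"
    using K by (auto simp: comparator_structure_def hom_def)
  have fr: "(cmp Y \<otimes> ii Y) \<cdot> ai Y Y Y \<cdot> (ii Y \<otimes> cpy Y) = cpy Y \<cdot> cmp Y"
    using K by (simp add: comparator_structure_def)
  have sw: "(ii Y \<otimes> cpy Y) \<cdot> (f \<otimes> ii Y) = (f \<otimes> ii (oT Y Y)) \<cdot> (ii X \<otimes> cpy Y)"
    using ichg[of f "ii Y" "ii Y" "cpy Y"] ichg[of "ii X" f "cpy Y" "ii (oT Y Y)"] f by simp
  have "cpy Y \<cdot> cmp Y \<cdot> (f \<otimes> ii Y) = (cmp Y \<otimes> ii Y) \<cdot> ai Y Y Y \<cdot> (ii Y \<otimes> cpy Y) \<cdot> (f \<otimes> ii Y)"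
    using reassoc[OF fr[symmetric], of "f \<otimes> ii Y"] c f by simp
  also have "\<dots> = (cmp Y \<otimes> ii Y) \<cdot> ai Y Y Y \<cdot> (f \<otimes> ii (oT Y Y)) \<cdot> (ii X \<otimes> cpy Y)"
    using sw by simp
  also have "\<dots> = (cmp Y \<otimes> ii Y) \<cdot> ((f \<otimes> ii Y) \<otimes> ii Y) \<cdot> ai X Y Y \<cdot> (ii X \<otimes> cpy Y)"
    using reassoc[OF ai_n[of f "ii Y" "ii Y"], of "ii X \<otimes> cpy Y"] f by simp
  also have "\<dots> = ((cmp Y \<cdot> (f \<otimes> ii Y)) \<otimes> ii Y) \<cdot> ai X Y Y \<cdot> (ii X \<otimes> cpy Y)"
    using tr_dist[of "f \<otimes> ii Y" "cmp Y" Y] c f by simp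
  finally show ?thesis .
qed

lemma step3:
  assumes g: "ar g" "dm g = oT X Y" "cd g = Y"
    and s1: "cpy Y \<cdot> g = (g \<otimes> ii Y) \<cdot> ai X Y Y \<cdot> (ii X \<otimes> cpy Y)"
  shows "g = lu Y \<cdot> ((ds Y \<cdot> g) \<otimes> (lu Y \<cdot> (ds X \<otimes> ii Y))) \<cdot> cpy (oT X Y)"
proof -
  let ?p = "lu Y \<cdot> (ds X \<otimes> ii Y)"
  have "(ds Y \<cdot> g) \<otimes> ?p = (ds Y \<otimes> ii Y) \<cdot> (g \<otimes> ?p)"
    using ichg[of g "ds Y" ?p "ii Y"] g by simp
  also have "g \<otimes> ?p = (g \<otimes> ii Y) \<cdot> (ii (oT X Y) \<otimes> ?p)"
    using ichg[of "ii (oT X Y)" g ?p "ii Y"] g by simp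
  finally have e: "(ds Y \<cdot> g) \<otimes> ?p = (ds Y \<otimes> ii Y) \<cdot> (g \<otimes> ii Y) \<cdot> (ii (oT X Y) \<otimes> ?p)"
    using g by simp
  have "lu Y \<cdot> ((ds Y \<cdot> g) \<otimes> ?p) \<cdot> cpy (oT X Y) = lu Y \<cdot> (ds Y \<otimes> ii Y) \<cdot> (g \<otimes> ii Y) \<cdot> (ii (oT X Y) \<otimes> ?p) \<cdot> cpy (oT X Y)"
    using e g by simp
  also have "\<dots> = lu Y \<cdot> (ds Y \<otimes> ii Y) \<cdot> (g \<otimes> ii Y) \<cdot> ai X Y Y \<cdot> (ii X \<otimes> cpy Y)"
    using E[of X Y] g by simp
  also have "\<dots> = lu Y \<cdot> (ds Y \<otimes> ii Y) \<cdot> cpy Y \<cdot> g"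
    using s1 g by simp
  also have "\<dots> = g"
    using reassoc[OF counit[of Y], of g] g by simp
  finally show ?thesis by simp
qed

lemma PN: "lu Y \<cdot> (ds (oT X Y) \<otimes> (lu Y \<cdot> (ds X \<otimes> ii Y))) \<cdot> cpy (oT X Y) = lu Y \<cdot> (ds X \<otimes> ii Y)"
proof -
  let ?p = "lu Y \<cdot> (ds X \<otimes> ii Y)"
  have "ds (oT X Y) \<otimes> ?p = (ii U \<otimes> ?p) \<cdot> (ds (oT X Y) \<otimes> ii (oT X Y))"
    using ichg[of "ds (oT X Y)" "ii U" "ii (oT X Y)" ?p] by simp
  then have "lu Y \<cdot> (ds (oT X Y) \<otimes> ?p) \<cdot> cpy (oT X Y) = lu Y \<cdot> (ii U \<otimes> ?p) \<cdot> (ds (oT X Y) \<otimes> ii (oT X Y)) \<cdot> cpy (oT X Y)"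
    by simp
  also have "\<dots> = ?p \<cdot> lu (oT X Y) \<cdot> (ds (oT X Y) \<otimes> ii (oT X Y)) \<cdot> cpy (oT X Y)"
    using reassoc[OF lu_n[of ?p], of "(ds (oT X Y) \<otimes> ii (oT X Y)) \<cdot> cpy (oT X Y)"] by simp
  also have "\<dots> = ?p" using counit[of "oT X Y"] by simp
  finally show ?thesis .
qed

lemma lu_channel: "channel C (lu Y)"
proof -
  have "ds Y \<cdot> lu Y = lu U \<cdot> (ii U \<otimes> ds Y)" using lu_n[of "ds Y"] by simp
  then show ?thesis by (simp add: channel_def disc_tensor disc_unit)
qed

lemma dmn_p: "dmn C (lu Y \<cdot> (ds X \<otimes> ii Y)) = ds (oT X Y)"
proof -
  have "ds Y \<cdot> lu Y \<cdot> (ds X \<otimes> ii Y) = lu U \<cdot> (ii U \<otimes> ds Y) \<cdot> (ds X \<otimes> ii Y)"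
    using reassoc[OF lu_n[of "ds Y"], of "ds X \<otimes> ii Y"] by simp
  also have "\<dots> = lu U \<cdot> (ds X \<otimes> ds Y)"
    using ichg[of "ds X" "ii U" "ii Y" "ds Y"] by simp
  finally show ?thesis by (simp add: dmn_def disc_tensor)
qed

lemma main:
  assumes N: "normalisation_structure C nrm" and K: "comparator_structure C cmp"
    and f: "ar f" "dm f = X" "cd f = Y" and fs: "full_support C nrm cmp f"
  shows "nrm (cmp Y \<cdot> (f \<otimes> ii Y)) = lu Y \<cdot> (ds X \<otimes> ii Y)"
proof -
  let ?p = "lu Y \<cdot> (ds X \<otimes> ii Y)"
  let ?g = "cmp Y \<cdot> (f \<otimes> ii Y)"
  let ?d = "ds Y \<cdot> ?g"
  have c: "ar (cmp Y)" "dm (cmp Y) = oT Y Y" "cd (cmp Y) = Y"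
    using K by (auto simp: comparator_structure_def hom_def)
  have g: "ar ?g" "dm ?g = oT X Y" "cd ?g = Y" using c f by auto
  have N1: "\<And>h. ar h \<Longrightarrow> normalised C (nrm h) \<and> is_normalisation C h (nrm h)"
   and N2: "\<And>a b. ar a \<Longrightarrow> ar b \<Longrightarrow> nrm (a \<otimes> b) = nrm a \<otimes> nrm b"
   and N3: "\<And>h k A B D. h \<in> hom C A B \<Longrightarrow> k \<in> hom C B D \<Longrightarrow> channel C k \<Longrightarrow> nrm (k \<cdot> h) = k \<cdot> nrm h"
   and N5: "\<And>h A B. h \<in> hom C (oT A A) B \<Longrightarrow> nrm (h \<cdot> cpy A) = nrm h \<cdot> cpy A"
   and N6: "\<And>h. ar h \<Longrightarrow> normalised C h \<Longrightarrow> nrm h = h"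
    using N unfolding normalisation_structure_def by blast+
  have nd: "nrm ?d = ds (oT X Y)"
    using fs f c by (simp add: full_support_def cap_def)
  have np: "nrm ?p = ?p"
  proof (rule N6)
    show "ar ?p" by simp
    show "normalised C ?p"
      unfolding normalised_def is_normalisation_def using PN[of Y X]
      by (simp add: dmn_p hom_def)
  qed
  have s1: "cpy Y \<cdot> ?g = (?g \<otimes> ii Y) \<cdot> ai X Y Y \<cdot> (ii X \<otimes> cpy Y)"
    using step1[OF K f] c f by simp
  have geq: "?g = lu Y \<cdot> (?d \<otimes> ?p) \<cdot> cpy (oT X Y)"
    using step3[of ?g X Y] g s1 by simp
  have "nrm ?g = nrm (lu Y \<cdot> ((?d \<otimes> ?p) \<cdot> cpy (oT X Y)))"
    using geq by simp
  also have "\<dots> = lu Y \<cdot> nrm ((?d \<otimes> ?p) \<cdot> cpy (oT X Y))"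
    by (rule N3[of _ "oT X Y" "oT U Y" _ Y]) (use g c f lu_channel in \<open>auto simp: hom_def\<close>)
  also have "\<dots> = lu Y \<cdot> nrm (?d \<otimes> ?p) \<cdot> cpy (oT X Y)"
    using N5[of "?d \<otimes> ?p" "oT X Y" "oT U Y"] g by (simp add: hom_def)
  also have "\<dots> = lu Y \<cdot> (ds (oT X Y) \<otimes> ?p) \<cdot> cpy (oT X Y)"
    using N2[of ?d ?p] g nd np by simp
  also have "\<dots> = ?p" by (rule PN)
  finally show ?thesis .
qed
end

theorem proposition4p3:
  fixes C :: "('o, 'm, 'z) cdcat_scheme"
    and nrm :: "'m \<Rightarrow> 'm"
    and cmp :: "'o \<Rightarrow> 'm"
  assumes "cd_category C"
    and "normalisation_structure C nrm"
    and "comparator_structure C cmp"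
    and "cancellative C cmp"
  shows "(\<forall>X \<omega>. \<omega> \<in> hom C (cUnit C) X \<and> full_support C nrm cmp \<omega> \<longrightarrow>
            nrm (cComp C (cmp X) (cTa C \<omega> (cId C X))) = cLU C X)
       \<and> (\<forall>X Y c. c \<in> hom C X Y \<and> channel C c \<and> full_support C nrm cmp c \<longrightarrow>
            nrm (cComp C (cmp Y) (cTa C c (cId C Y)))
            = cComp C (cLU C Y) (cTa C (cDisc C X) (cId C Y)))"
proof -
  interpret cd_category C by (rule assms(1))
  show ?thesis
  proof (intro conjI allI impI)
    fix X \<omega> assume h: "\<omega> \<in> hom C (cUnit C) X \<and> full_support C nrm cmp \<omega>"
    have "nrm (cmp X \<cdot> (\<omega> \<otimes> ii X)) = lu X \<cdot> (ds U \<otimes> ii X)"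
      using main[OF assms(2,3), of \<omega> U X] h by (simp add: hom_def)
    then show "nrm (cComp C (cmp X) (cTa C \<omega> (cId C X))) = cLU C X"
      by (simp add: disc_unit)
  next
    fix X Y c assume h: "c \<in> hom C X Y \<and> channel C c \<and> full_support C nrm cmp c"
    show "nrm (cComp C (cmp Y) (cTa C c (cId C Y))) = cComp C (cLU C Y) (cTa C (cDisc C X) (cId C Y))"
      using main[OF assms(2,3), of c X Y] h by (simp add: hom_def)
  qed
qed

end
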